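(* Fix an integer $M\ge 6$ and a time $t>M$ of an insertion-only edge stream, so $|E^{(t)}|=t$. Let $\mathcal{S}_{\mathrm{mix}}$ be the sample of $M$ edges from $E^{(t)}$ obtained by reservoir sampling with capacity $M$ (as described in the context), and let $\mathcal{S}_{\mathrm{in}}$ be obtained by including each edge of $E^{(t)}$ independently with probability $M/t$. Let $f:2^{E^{(t)}}\to\{0,1\}$ be an arbitrary function. Then \[ \Pr\left(f(\mathcal{S}_{\mathrm{mix}})=1\right)\le e\sqrt{M}\,\Pr\left(f(\mathcal{S}_{\mathrm{in}})=1\right). \]
   Context: An insertion-only edge stream: at each time step $s=1,2,\dots$ an edge $e_s$ between two distinct vertices arrives, which is not already present; $E^{(t)}=\{e_1,\dots,e_t\}$. Reservoir sampling with capacity $M$: the sample starts empty; at time $s$, if $s\le M$ the edge $e_s$ is inserted; if $s>M$, with probability $M/s$ an edge chosen uniformly at random from the sample is removed and $e_s$ is inserted, otherwise the sample is unchanged. $\mathcal{S}_{\mathrm{mix}}$ is the sample at the end of time step $t$. *)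

theory Defs
  imports "HOL-Probability.Probability"
begin

definition reservoir_step :: "nat \<Rightarrow> nat \<Rightarrow> 'e \<Rightarrow> 'e set \<Rightarrow> 'e set pmf" where
  "reservoir_step M s e S =
     (if s \<le> M then return_pmf (insert e S)
      else do {
        b \<leftarrow> bernoulli_pmf (real M / real s);
        if b then map_pmf (\<lambda>x. insert e (S - {x})) (pmf_of_set S)
        else return_pmf S
      })"

text \<open>Reservoir sampling run on a stream given in reverse order (most recent edge first).\<close>
fun reservoir_rev :: "nat \<Rightarrow> 'e list \<Rightarrow> 'e set pmf" where
  "reservoir_rev M [] = return_pmf {}"
| "reservoir_rev M (e # rs) =
     bind_pmf (reservoir_rev M rs) (reservoir_step M (length rs + 1) e)"

definition reservoir :: "nat \<Rightarrow> 'e list \<Rightarrow> 'e set pmf" where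
  "reservoir M es = reservoir_rev M (rev es)"

definition indep_sample :: "real \<Rightarrow> 'e set \<Rightarrow> 'e set pmf" where
  "indep_sample p E = map_pmf (\<lambda>g. {e \<in> E. g e}) (Pi_pmf E False (\<lambda>_. bernoulli_pmf p))"

end

theory Submission
  imports Defs
begin


lemma ln_lower: fixes x :: real assumes "0 \<le> x" shows "2*x/(2+x) \<le> ln (1+x)"
proof -
  let ?f = "\<lambda>y::real. ln (1+y) - 2*y/(2+y)"
  have "?f 0 \<le> ?f x"
  proof (rule DERIV_nonneg_imp_nondecreasing[OF assms])
    fix y :: real assume y: "0 \<le> y" "y \<le> x"
    have "DERIV ?f y :> (1/(1+y) - (2*(2+y) - 2*y)/(2+y)^2)"
      using y by (auto intro!: derivative_eq_intros simp: power2_eq_square)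
    moreover have "1/(1+y) - (2*(2+y) - 2*y)/(2+y)^2 = y^2/((1+y)*(2+y)^2)"
    proof -
      have "1+y \<noteq> 0" "2+y \<noteq> 0" using y by auto
      thus ?thesis by (simp add: divide_simps power2_eq_square) (simp add: algebra_simps)
    qed
    moreover have "y^2/((1+y)*(2+y)^2) \<ge> 0" using y by simp
    ultimately show "\<exists>d. DERIV ?f y :> d \<and> 0 \<le> d" by metis
  qed
  thus ?thesis by simp
qed

definition hh :: "nat \<Rightarrow> real" where "hh n = fact n * exp (real n) / real n ^ n"

lemma hh_pos: "hh n > 0" 
  by (cases n) (auto simp: hh_def)

lemma hh_Suc: "hh (Suc n) = fact n * exp (real n) * exp 1 / (real n + 1) ^ n"
proof -
  have "hh (Suc n) = ((real n+1)*fact n) * (exp (real n) * exp 1) / ((real n+1)*(real n+1)^n)"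
    unfolding hh_def by (simp add: exp_add[symmetric] add.commute)
  also have "\<dots> = fact n * exp (real n) * exp 1 / (real n + 1) ^ n"
    by (simp add: mult.assoc)
  finally show ?thesis .
qed

lemma hh_mono_step: "hh n \<le> hh (Suc n)"
proof (cases "n = 0")
  case True thus ?thesis by (simp add: hh_def)
next
  case False
  have "(1 + 1 / real n) ^ n \<le> exp 1" by (rule exp_ge_one_plus_x_over_n_power_n) (use False in auto)
  hence "((real n + 1)/ real n) ^ n \<le> exp 1" using False by (simp add: field_simps)
  hence A: "(real n + 1) ^ n \<le> exp 1 * real n ^ n" using False by (simp add: power_divide field_simps)
  have "hh n = fact n * exp (real n) / real n ^ n" by (simp add: hh_def)
  have "hh (Suc n) = fact n * exp (real n) * exp 1 / (real n + 1) ^ n"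
    by (rule hh_Suc)
  moreover have "fact n * exp (real n) / real n ^ n \<le> fact n * exp (real n) * exp 1 / (real n + 1) ^ n"
    using A False by (simp add: field_simps)
  ultimately show ?thesis by (simp add: hh_def)
qed

lemma hh_mono: "m \<le> n \<Longrightarrow> hh m \<le> hh n"
  by (induction n rule: dec_induct) (auto intro: order_trans hh_mono_step)

lemma key_step: fixes n :: nat assumes "n \<ge> 1"
  shows "exp 2 * real n ^ (2*n+1) \<le> (real n + 1) ^ (2*n+1)"
proof -
  have "2 * (1/real n) / (2 + 1/real n) \<le> ln (1 + 1/real n)" by (rule ln_lower) simp
  moreover have "2 * (1/real n) / (2 + 1/real n) = 2 / (2 * real n + 1)" using assms by (simp add: field_simps)
  ultimately have "2 \<le> (2 * real n + 1) * ln (1 + 1/real n)"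
    by (simp add: field_simps)
  hence "exp 2 \<le> exp (real (2*n+1) * ln (1 + 1/real n))"
    by (simp only: of_nat_add of_nat_mult of_nat_numeral of_nat_1 exp_le_cancel_iff)
  also have "\<dots> = (1 + 1/real n) ^ (2*n+1)"
    by (subst exp_of_nat_mult) (simp add: add_pos_nonneg)
  also have "\<dots> = (real n + 1) ^ (2*n+1) / real n ^ (2*n+1)"
    using assms by (simp add: power_divide field_simps)
  finally show ?thesis using assms by (simp add: field_simps)
qed

lemma hh_sq: "n \<ge> 1 \<Longrightarrow> (hh n)^2 \<le> exp 2 * real n"
proof (induction n rule: dec_induct)
  case base thus ?case by (simp add: hh_def power2_eq_square exp_add[symmetric])
next
  case (step n)
  define a where "a = fact n * exp (real n)"
  have a0: "a > 0" by (simp add: a_def)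
  have h1: "hh n = a / real n ^ n" by (simp add: hh_def a_def)
  have h2: "hh (Suc n) = a * exp 1 / (real n + 1) ^ n"
    by (simp add: hh_Suc a_def)
  have IH: "a^2 \<le> exp 2 * real n ^ (2*n+1)"
    using step.IH step.hyps by (simp add: h1 power_divide field_simps power_mult power2_eq_square)
  have "a^2 \<le> (real n + 1) ^ (2*n+1)" using IH key_step[of n] step.hyps by linarith
  hence "a^2 * exp 2 / (real n + 1)^(2*n) \<le> (real n + 1) ^ (2*n+1) * exp 2 / (real n + 1)^(2*n)"
    by (intro divide_right_mono mult_right_mono) auto
  moreover have "(hh (Suc n))^2 = a^2 * exp 2 / (real n + 1)^(2*n)"
    by (simp add: h2 power_divide power_mult_distrib power_mult exp_add[symmetric] power2_eq_square mult_ac)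
  ultimately have "(hh (Suc n))^2 \<le> (real n + 1) ^ (2*n+1) * exp 2 / (real n + 1)^(2*n)"
    by simp
  also have "\<dots> = exp 2 * real (Suc n)" by (simp add: power_add)
  finally show ?case .
qed



lemma binom_bound:
  fixes M t :: nat assumes "1 \<le> M" "M < t"
  shows "1 \<le> exp 1 * sqrt (real M) * (real (t choose M) * (real M / real t)^M * (1 - real M / real t)^(t-M))"
proof -
  define k where "k = t - M"
  have k1: "k \<ge> 1" and tk: "t = M + k" using assms by (auto simp: k_def)
  have hM: "hh M \<le> exp 1 * sqrt (real M)"
  proof (rule power2_le_imp_le)
    show "(hh M)^2 \<le> (exp 1 * sqrt (real M))^2"
    proof -
      have e: "(exp 1)^2 = exp (2::real)" by (simp add: power2_eq_square exp_add[symmetric])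
      have "(exp 1 * sqrt (real M))^2 = (exp 1)^2 * (sqrt (real M))^2" by (rule power_mult_distrib)
      also have "\<dots> = exp 2 * real M" by (simp only: e real_sqrt_pow2 of_nat_0_le_iff)
      finally have "(exp 1 * sqrt (real M))^2 = exp 2 * real M" .
      thus ?thesis using hh_sq[OF assms(1)] by simp
    qed
  qed simp
  have hk: "hh k \<le> hh t" using tk by (intro hh_mono) simp
  have eq: "real (t choose M) * (real M / real t)^M * (1 - real M / real t)^(t-M)
          = hh t / (hh M * hh k)"
  proof -
    have t0: "real t > 0" using assms by simp
    have "1 - real M / real t = real k / real t" using t0 tk by (simp add: field_simps)
    moreover have "real (t choose M) = fact t / (fact M * fact k)"
      using binomial_fact[of M t] assms k_def by simp
    moreover have "exp (real t) = exp (real M) * exp (real k)" by (simp add: tk exp_add[symmetric])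
    moreover have "(real M + real k) ^ t = (real M + real k) ^ M * (real M + real k) ^ k"
      by (simp add: tk power_add)
    ultimately show ?thesis
      using t0 k1 assms(1) unfolding hh_def k_def[symmetric]
      by (simp add: power_divide field_simps)
  qed
  have "hh M * hh k \<le> exp 1 * sqrt (real M) * hh t"
    using hM hk by (intro mult_mono) (auto intro: less_imp_le hh_pos)
  hence "1 \<le> exp 1 * sqrt (real M) * (hh t / (hh M * hh k))"
    using hh_pos[of M] hh_pos[of k] by (simp add: field_simps)
  thus ?thesis using eq by simp
qed



definition U :: "'a set \<Rightarrow> nat \<Rightarrow> 'a set set" where "U R k = {S. S \<subseteq> R \<and> card S = k}"

lemma U_finite: "finite R \<Longrightarrow> finite (U R k)"
  unfolding U_def by (rule finite_subset[of _ "Pow R"]) auto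

lemma U_card: "finite R \<Longrightarrow> card (U R k) = card R choose k"
  unfolding U_def by (rule n_subsets)

lemma U_full: "finite R \<Longrightarrow> U R (card R) = {R}"
  unfolding U_def using card_subset_eq by blast

lemma step_pmf:
  fixes S :: "'a set"
  assumes "finite S" "card S = M" "M \<ge> 1" "M < s"
  shows "pmf (reservoir_step M s e S) T =
     real M / real s * (real (card {x\<in>S. insert e (S - {x}) = T}) / real M)
     + (1 - real M / real s) * (if S = T then 1 else 0)"
proof -
  have p: "0 \<le> real M / real s" "real M / real s \<le> 1" using assms by auto
  have S0: "S \<noteq> {}" using assms by auto
  have "measure (measure_pmf (pmf_of_set S)) ((\<lambda>x. insert e (S - {x})) -` {T})
        = real (card {x\<in>S. insert e (S - {x}) = T}) / real M"
    using assms S0 by (subst measure_pmf_of_set) (auto intro!: arg_cong[where f=card] simp: Int_def)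
  thus ?thesis using assms p
    unfolding reservoir_step_def by (simp add: pmf_bind pmf_map indicator_def)
qed

lemma cnt_lemma:
  assumes fin: "finite R" and eR: "e \<notin> R" and M1: "M \<ge> 1"
  shows "(\<Sum>S\<in>U R M. real (card {x\<in>S. insert e (S - {x}) = T}))
       = (if T \<in> U (insert e R) M \<and> e \<in> T then real (card R + 1 - M) else 0)"
proof -
  let ?B = "\<lambda>S. {x\<in>S. insert e (S - {x}) = T}"
  have finB: "\<forall>S\<in>U R M. finite (?B S)" using fin unfolding U_def by (auto intro: finite_subset)
  have "(\<Sum>S\<in>U R M. real (card (?B S))) = real (\<Sum>S\<in>U R M. card (?B S))" by simp
  also have "\<dots> = real (card (SIGMA S:U R M. ?B S))"
    using card_SigmaI[OF U_finite[OF fin] finB] by simp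
  also have "\<dots> = (if T \<in> U (insert e R) M \<and> e \<in> T then real (card R + 1 - M) else 0)"
  proof (cases "T \<in> U (insert e R) M \<and> e \<in> T")
    case True
    hence T: "T \<subseteq> insert e R" "card T = M" "e \<in> T" unfolding U_def by auto
    have finT: "finite T" using T(1) fin finite_subset by blast
    let ?T' = "T - {e}"
    have T'R: "?T' \<subseteq> R" using T by auto
    have cT': "card ?T' = M - 1" using T finT by simp
    have "(SIGMA S:U R M. ?B S) = (\<lambda>x. (insert x ?T', x)) ` (R - ?T')"
    proof (intro equalityI subsetI)
      fix p assume "p \<in> (SIGMA S:U R M. ?B S)"
      then obtain S x where p: "p = (S, x)" "S \<subseteq> R" "card S = M" "x \<in> S" "insert e (S - {x}) = T"
        unfolding U_def by auto
      have "e \<notin> S" using p eR by auto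
      hence "S - {x} = ?T'" using p by auto
      hence "S = insert x ?T'" using p by auto
      moreover have "x \<in> R - ?T'" using p \<open>S - {x} = ?T'\<close> by auto
      ultimately show "p \<in> (\<lambda>x. (insert x ?T', x)) ` (R - ?T')" using p by auto
    next
      fix p assume "p \<in> (\<lambda>x. (insert x ?T', x)) ` (R - ?T')"
      then obtain x where p: "p = (insert x ?T', x)" "x \<in> R" "x \<notin> ?T'" by auto
      have "x \<noteq> e" using p eR by auto
      have "card (insert x ?T') = M" using p finT cT' M1 by simp
      moreover have "insert x ?T' \<subseteq> R" using p T'R by auto
      moreover have "insert e (insert x ?T' - {x}) = T" using p T by auto
      ultimately show "p \<in> (SIGMA S:U R M. ?B S)" using p unfolding U_def by auto
    qed
    moreover have "inj_on (\<lambda>x. (insert x ?T', x)) (R - ?T')" by (rule inj_onI) auto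
    ultimately have "card (SIGMA S:U R M. ?B S) = card (R - ?T')" by (simp add: card_image)
    also have "\<dots> = card R + 1 - M" using T'R cT' fin finT M1 T
      by (simp add: card_Diff_subset)
    finally show ?thesis using True by simp
  next
    case False
    have "(SIGMA S:U R M. ?B S) = {}"
    proof (rule ccontr)
      assume "(SIGMA S:U R M. ?B S) \<noteq> {}"
      then obtain S x where p: "S \<subseteq> R" "card S = M" "x \<in> S" "insert e (S - {x}) = T"
        unfolding U_def by auto
      have "e \<notin> S" using p eR by auto
      have fS: "finite S" using p fin finite_subset by blast
      have "card T = M" using p \<open>e \<notin> S\<close> fS M1 by (auto simp: card_insert_if)
      moreover have "T \<subseteq> insert e R" "e \<in> T" using p by auto
      ultimately show False using False unfolding U_def by auto
    qed
    thus ?thesis using False by (simp only: card.empty of_nat_0 if_False)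
  qed
  finally show ?thesis .
qed

lemma U_iff: "e \<notin> R \<Longrightarrow> T \<in> U R M \<longleftrightarrow> T \<in> U (insert e R) M \<and> e \<notin> T"
  unfolding U_def by auto

lemma step_uniform:
  assumes fin: "finite R" and eR: "e \<notin> R" and M1: "M \<ge> 1" and nM: "M \<le> card R"
  shows "bind_pmf (pmf_of_set (U R M)) (reservoir_step M (card R + 1) e) = pmf_of_set (U (insert e R) M)"
proof (rule pmf_eqI)
  fix T
  define n where "n = card R"
  define p where "p = real M / real (n+1)"
  have cU: "card (U R M) = n choose M" using U_card[OF fin] n_def by simp
  have cU': "card (U (insert e R) M) = (n+1) choose M" using U_card[of "insert e R"] fin eR n_def by simp
  have Npos: "n choose M > 0" using nM n_def by simp
  have N'pos: "(n+1) choose M > 0" using nM n_def by simp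
  have ne: "U R M \<noteq> {}" using cU Npos by auto
  have ne': "U (insert e R) M \<noteq> {}" using cU' N'pos by auto
  have bin: "real (n+1-M) * real ((n+1) choose M) = real (n+1) * real (n choose M)"
    using binomial_absorb_comp[of "n+1" M] by (metis diff_add_inverse2 of_nat_mult)
  have "(\<Sum>S\<in>U R M. pmf (reservoir_step M (card R + 1) e S) T)
      = (\<Sum>S\<in>U R M. p / real M * real (card {x\<in>S. insert e (S - {x}) = T})
           + (1 - p) * (if S = T then 1 else 0))"
  proof (rule sum.cong[OF refl])
    fix S assume "S \<in> U R M"
    hence "finite S" "card S = M" using fin unfolding U_def by (auto intro: finite_subset)
    thus "pmf (reservoir_step M (card R + 1) e S) T = p / real M * real (card {x\<in>S. insert e (S - {x}) = T})
           + (1 - p) * (if S = T then 1 else 0)"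
      using step_pmf[of S M "card R + 1" e T] M1 nM unfolding p_def n_def by simp
  qed
  also have "\<dots> = p / real M * (\<Sum>S\<in>U R M. real (card {x\<in>S. insert e (S - {x}) = T}))
           + (1 - p) * (if T \<in> U R M then 1 else 0)"
    using U_finite[OF fin] by (simp add: sum.distrib sum_distrib_left[symmetric] sum_divide_distrib[symmetric])
  also have "\<dots> = p / real M * (if T \<in> U (insert e R) M \<and> e \<in> T then real (n + 1 - M) else 0)
           + (1 - p) * (if T \<in> U (insert e R) M \<and> e \<notin> T then 1 else 0)"
    using cnt_lemma[OF fin eR M1, of T] U_iff[OF eR, of T M] n_def by simp
  finally have S: "(\<Sum>S\<in>U R M. pmf (reservoir_step M (card R + 1) e S) T) = \<dots>" .
  have lhs: "pmf (bind_pmf (pmf_of_set (U R M)) (reservoir_step M (card R + 1) e)) T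
     = (p / real M * (if T \<in> U (insert e R) M \<and> e \<in> T then real (n + 1 - M) else 0)
           + (1 - p) * (if T \<in> U (insert e R) M \<and> e \<notin> T then 1 else 0)) / real (n choose M)"
    using S cU by (simp add: pmf_bind_pmf_of_set[OF ne U_finite[OF fin]])
  have rhs: "pmf (pmf_of_set (U (insert e R) M)) T = (if T \<in> U (insert e R) M then 1 / real ((n+1) choose M) else 0)"
    using ne' U_finite[of "insert e R"] fin cU' by simp
  have n1: "real (n+1) > 0" by simp
  have Mn: "M \<le> n" using nM n_def by simp
  show "pmf (bind_pmf (pmf_of_set (U R M)) (reservoir_step M (card R + 1) e)) T
      = pmf (pmf_of_set (U (insert e R) M)) T"
  proof (cases "T \<in> U (insert e R) M")
    case True
    have "1 - p = real (n + 1 - M) / real (n+1)" using Mn unfolding p_def by (simp add: field_simps of_nat_diff)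
    moreover have "real (n + 1 - M) / real (n+1) / real (n choose M) = 1 / real ((n+1) choose M)"
    proof -
      have a: "real (n choose M) > 0" "real ((n+1) choose M) > 0" using Npos N'pos by simp_all
      show ?thesis using bin a n1 by (simp add: divide_simps)
    qed
    moreover have pM: "p / real M = 1 / real (n+1)" using M1 by (simp add: p_def)
    ultimately have A: "1 - p = real (n + 1 - M) / real (n+1)"
       and B: "real (n + 1 - M) / real (n+1) / real (n choose M) = 1 / real ((n+1) choose M)" by auto
    show ?thesis
    proof (cases "e \<in> T")
      case True
      with \<open>T \<in> U (insert e R) M\<close> show ?thesis
        unfolding lhs rhs using B by (simp add: pM)
    next
      case False
      with \<open>T \<in> U (insert e R) M\<close> show ?thesis
        unfolding lhs rhs using B by (simp add: A)
    qed
  qed (unfold lhs rhs, simp)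
qed

lemma res_uniform:
  fixes rs :: "'a list"
  shows "distinct rs \<Longrightarrow> M \<ge> 1 \<Longrightarrow> reservoir_rev M rs = pmf_of_set (U (set rs) (min M (length rs)))"
proof (induction rs)
  case Nil
  have "U ({}::'a set) 0 = {{}}" using U_full[of "{}::'a set"] by simp
  thus ?case by (simp add: pmf_of_set_singleton)
next
  case (Cons e rs)
  let ?R = "set rs"
  have d: "distinct rs" "e \<notin> ?R" using Cons.prems by auto
  have cR: "card ?R = length rs" using d distinct_card by blast
  have IH: "reservoir_rev M rs = pmf_of_set (U ?R (min M (length rs)))" using Cons d by simp
  show ?case
  proof (cases "length rs < M")
    case True
    have "U ?R (min M (length rs)) = {?R}" using True U_full[of ?R] cR by simp
    moreover have "U (insert e ?R) (min M (length (e#rs))) = {insert e ?R}"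
      using True U_full[of "insert e ?R"] cR d by simp
    ultimately show ?thesis using IH True
      by (simp add: reservoir_step_def pmf_of_set_singleton bind_return_pmf del: insert_Diff_single)
  next
    case False
    have "reservoir_rev M (e # rs) = bind_pmf (pmf_of_set (U ?R M)) (reservoir_step M (card ?R + 1) e)"
      using IH False cR by simp
    also have "\<dots> = pmf_of_set (U (insert e ?R) M)"
      using step_uniform[of ?R e M] d Cons.prems False cR by simp
    finally show ?thesis using False by simp
  qed
qed




lemma indep_pmf_lower:
  fixes E S :: "'a set" and p :: real
  assumes fin: "finite E" and SE: "S \<subseteq> E" and p: "0 \<le> p" "p \<le> 1"
  shows "p ^ card S * (1 - p) ^ (card E - card S) \<le> pmf (indep_sample p E) S"
proof -
  let ?P = "Pi_pmf E False (\<lambda>_. bernoulli_pmf p)"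
  let ?h = "\<lambda>g. {e \<in> E. g e}"
  let ?g0 = "\<lambda>x. x \<in> S"
  have h0: "?h ?g0 = S" using SE by auto
  have "pmf ?P ?g0 = (\<Prod>x\<in>E. pmf (bernoulli_pmf p) (x \<in> S))"
    using SE by (intro pmf_Pi' fin) auto
  also have "\<dots> = (\<Prod>x\<in>E - S. pmf (bernoulli_pmf p) (x \<in> S)) * (\<Prod>x\<in>S. pmf (bernoulli_pmf p) (x \<in> S))"
    by (rule prod.subset_diff[OF SE fin])
  also have "\<dots> = (\<Prod>x\<in>E - S. 1 - p) * (\<Prod>x\<in>S. p)"
  proof -
    have "(\<Prod>x\<in>E - S. pmf (bernoulli_pmf p) (x \<in> S)) = (\<Prod>x\<in>E - S. 1 - p)"
      using p by (intro prod.cong) auto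
    moreover have "(\<Prod>x\<in>S. pmf (bernoulli_pmf p) (x \<in> S)) = (\<Prod>x\<in>S. p)"
      using p by (intro prod.cong) auto
    ultimately show ?thesis by simp
  qed
  also have "\<dots> = p ^ card S * (1 - p) ^ (card E - card S)"
    using SE fin by (simp add: card_Diff_subset finite_subset)
  finally have eq: "pmf ?P ?g0 = p ^ card S * (1 - p) ^ (card E - card S)" .
  have "pmf ?P ?g0 = measure ?P {?g0}" by (simp add: measure_pmf_single)
  also have "\<dots> \<le> measure ?P (?h -` {S})"
    using h0 by (intro measure_pmf.finite_measure_mono) auto
  also have "\<dots> = pmf (indep_sample p E) S"
    unfolding indep_sample_def by (simp add: pmf_map)
  finally show ?thesis using eq by simp
qed

theorem lemma4p7:
  fixes M t :: nat and es :: "'v set list" and f :: "'v set set \<Rightarrow> bool"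
  assumes "M \<ge> 6" and "t > M" and "length es = t" and "distinct es"
    and "\<forall>e\<in>set es. card e = 2"
  shows "measure_pmf.prob (reservoir M es) {S. f S}
           \<le> exp 1 * sqrt (real M) * measure_pmf.prob (indep_sample (real M / real t) (set es)) {S. f S}"
proof -
  define E where "E = set es"
  define p where "p = real M / real t"
  define A where "A = U E M \<inter> {S. f S}"
  define N where "N = t choose M"
  have finE: "finite E" by (simp add: E_def)
  have cE: "card E = t" using assms distinct_card unfolding E_def by blast
  have M1: "M \<ge> 1" using assms by simp
  have p: "0 \<le> p" "p \<le> 1" using assms unfolding p_def by auto
  have res: "reservoir M es = pmf_of_set (U E M)"
    unfolding reservoir_def E_def using res_uniform[of "rev es" M] assms M1 by simp
  have cU: "card (U E M) = N" unfolding N_def using U_card[OF finE] cE by simp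
  have Npos: "N > 0" unfolding N_def using assms by simp
  have neU: "U E M \<noteq> {}" using cU Npos by auto
  have finA: "finite A" unfolding A_def using U_finite[OF finE] by simp
  have lhs: "measure_pmf.prob (reservoir M es) {S. f S} = real (card A) / real N"
    unfolding res using neU U_finite[OF finE] cU
    by (simp add: measure_pmf_of_set A_def)
  define q where "q = p ^ M * (1 - p) ^ (t - M)"
  have "real (card A) * q = (\<Sum>S\<in>A. q)" by simp
  also have "\<dots> \<le> (\<Sum>S\<in>A. pmf (indep_sample p E) S)"
  proof (rule sum_mono)
    fix S assume "S \<in> A"
    hence "S \<subseteq> E" "card S = M" unfolding A_def U_def by auto
    thus "q \<le> pmf (indep_sample p E) S"
      using indep_pmf_lower[OF finE _ p, of S] cE unfolding q_def by simp
  qed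
  also have "\<dots> = measure_pmf.prob (indep_sample p E) A"
    using finA by (simp add: measure_measure_pmf_finite)
  also have "\<dots> \<le> measure_pmf.prob (indep_sample p E) {S. f S}"
    by (intro measure_pmf.finite_measure_mono) (auto simp: A_def)
  finally have ind: "real (card A) * q \<le> measure_pmf.prob (indep_sample p E) {S. f S}" .
  have bb: "1 \<le> exp 1 * sqrt (real M) * (real N * q)"
    using binom_bound[OF M1 assms(2)] unfolding q_def p_def N_def by (simp add: mult_ac)
  have "real (card A) / real N \<le> real (card A) / real N * (exp 1 * sqrt (real M) * (real N * q))"
    using mult_left_mono[OF bb, of "real (card A) / real N"] by simp
  also have "\<dots> = exp 1 * sqrt (real M) * (real (card A) * q)" using Npos by (simp add: field_simps)
  also have "\<dots> \<le> exp 1 * sqrt (real M) * measure_pmf.prob (indep_sample p E) {S. f S}"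
    using ind by (intro mult_left_mono) auto
  finally show ?thesis unfolding lhs p_def E_def .
qed

end
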